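(* Let $d\ge2$ and $X=C^{\star}+R^{\star}S(U)$ with $C^{\star}\in\mathbb{R}^d$, $R^{\star}>0$, and $U$ a random vector in $[0,1]^{d-1}$ satisfying (H2). Let $\widetilde X^{(1)}=X^{(1)}$ and $\widetilde X^{(2)}=(X^{(2)},\dots,X^{(d)})^T$. Then for all $z\in\mathbb{C}$, $E[\exp(iz\widetilde X^{(1)})\mid\widetilde X^{(2)}]$ is not $P_{\widetilde X^{(2)}}$-a.s. the null random variable, and for all $z\in\mathbb{C}^{d-1}$, $E[\exp(iz^T\widetilde X^{(2)})\mid\widetilde X^{(1)}]$ is not $P_{\widetilde X^{(1)}}$-a.s. the null random variable, where $P_{\widetilde X^{(p)}}$ is the law of $\widetilde X^{(p)}$.
   Context: For $u\in[0,1]^{d-1}$, $S(u)\in\mathbb{R}^d$ has coordinates $S(u)^{(1)}=\cos(2\pi u^{(1)})$, $S(u)^{(k)}=\sin(2\pi u^{(1)})\prod_{l=2}^{k-1}\sin(\pi u^{(l)})\cos(\pi u^{(k)})$ for $2\le k\le d-1$, and $S(u)^{(d)}=\sin(2\pi u^{(1)})\prod_{l=2}^{d-1}\sin(\pi u^{(l)})$ (for $d=2$, $S(u)=(\cos2\pi u,\sin2\pi u)$). (H2): $U$ has a density $f^{\star}$ with respect to Lebesgue measure on $[0,1]^{d-1}$, and when $d>2$, $f^{\star}$ is positive on $(0,\gamma)^{d-1}$ for some $\gamma>0$. *)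

theory Defs
  imports "HOL-Probability.Probability"
begin

text \<open>Hyperspherical parametrisation S : [0,1]^(d-1) -> R^d.
  Coordinates are 0-indexed: paper's u^(l) is u (l-1), paper's S(u)^(k) is sph d u (k-1).\<close>
definition sph :: "nat \<Rightarrow> (nat \<Rightarrow> real) \<Rightarrow> (nat \<Rightarrow> real)" where
  "sph d u = (\<lambda>k.
     if k = 0 then cos (2 * pi * u 0)
     else if k < d - 1 then
       sin (2 * pi * u 0) * (\<Prod>l\<in>{1..<k}. sin (pi * u l)) * cos (pi * u k)
     else if k = d - 1 then
       sin (2 * pi * u 0) * (\<Prod>l\<in>{1..<d-1}. sin (pi * u l))
     else 0)"

definition cplx_cond_exp :: "'a measure \<Rightarrow> 'a measure \<Rightarrow> ('a \<Rightarrow> complex) \<Rightarrow> ('a \<Rightarrow> complex)" where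
  "cplx_cond_exp M F g = (\<lambda>x. Complex (real_cond_exp M F (\<lambda>y. Re (g y)) x)
                                        (real_cond_exp M F (\<lambda>y. Im (g y)) x))"

end

theory Submission
  imports Defs
begin

lemma telesc:
  fixes s :: "nat \<Rightarrow> real"
  shows "(\<Sum>j<m. (\<Prod>l\<in>{1..<Suc j}. (sin (s l))\<^sup>2) * (cos (s (Suc j)))\<^sup>2)
          + (\<Prod>l\<in>{1..<Suc m}. (sin (s l))\<^sup>2) = 1"
proof (induction m)
  case 0 then show ?case by simp
next
  case (Suc m)
  define P where "P = (\<lambda>j. \<Prod>l\<in>{1..<Suc j}. (sin (s l))\<^sup>2)"
  have e: "P (Suc m) = P m * (sin (s (Suc m)))\<^sup>2"
    unfolding P_def by (simp add: prod.atLeastLessThan_Suc)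
  have IH: "(\<Sum>j<m. P j * (cos (s (Suc j)))\<^sup>2) + P m = 1" using Suc unfolding P_def .
  have "(\<Sum>j<Suc m. P j * (cos (s (Suc j)))\<^sup>2) + P (Suc m)
     = (\<Sum>j<m. P j * (cos (s (Suc j)))\<^sup>2) + (P m * (cos (s (Suc m)))\<^sup>2 + P m * (sin (s (Suc m)))\<^sup>2)"
    unfolding e by simp
  moreover have "P m * (cos (s (Suc m)))\<^sup>2 + P m * (sin (s (Suc m)))\<^sup>2 = P m"
    by (metis distrib_left mult_1_right sin_cos_squared_add2)
  ultimately have "(\<Sum>j<Suc m. P j * (cos (s (Suc j)))\<^sup>2) + P (Suc m) = 1" using IH by linarith
  then show ?case unfolding P_def .
qed

lemma sph_sq_sum:
  assumes "d \<ge> 2"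
  shows "(\<Sum>k<d-1. (sph d u (Suc k))\<^sup>2) = 1 - (sph d u 0)\<^sup>2"
proof -
  obtain m where m: "d = Suc (Suc m)" using assms by (metis add_2_eq_Suc le_Suc_ex)
  let ?s = "sin (2 * pi * u 0)"
  have A: "(\<Sum>k<d-1. (sph d u (Suc k))\<^sup>2) = (\<Sum>j<m. (sph d u (Suc j))\<^sup>2) + (sph d u (Suc m))\<^sup>2"
    using m by (simp add: lessThan_Suc)
  have B: "(\<Sum>j<m. (sph d u (Suc j))\<^sup>2) = ?s\<^sup>2 * (\<Sum>j<m. (\<Prod>l\<in>{1..<Suc j}. (sin (pi * u l))\<^sup>2) * (cos (pi * u (Suc j)))\<^sup>2)"
    unfolding sum_distrib_left
    by (rule sum.cong) (auto simp: m sph_def power_mult_distrib prod_power_distrib)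
  have C: "(sph d u (Suc m))\<^sup>2 = ?s\<^sup>2 * (\<Prod>l\<in>{1..<Suc m}. (sin (pi * u l))\<^sup>2)"
    by (simp add: m sph_def power_mult_distrib prod_power_distrib)
  have D: "(sph d u 0)\<^sup>2 = (cos (2 * pi * u 0))\<^sup>2" by (simp add: sph_def)
  let ?T = "(\<Sum>j<m. (\<Prod>l\<in>{1..<Suc j}. (sin (pi * u l))\<^sup>2) * (cos (pi * u (Suc j)))\<^sup>2)"
  let ?P = "(\<Prod>l\<in>{1..<Suc m}. (sin (pi * u l))\<^sup>2)"
  have "?s\<^sup>2 * ?T + ?s\<^sup>2 * ?P = ?s\<^sup>2 * (?T + ?P)" by (simp only: distrib_left)
  also have "\<dots> = ?s\<^sup>2" using telesc[of "\<lambda>l. pi * u l" m] by (simp only: mult_1_right)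
  also have "\<dots> = 1 - (cos (2 * pi * u 0))\<^sup>2" by (rule sin_squared_eq)
  finally show ?thesis unfolding A B C D .
qed

lemma sph_abs_le:
  assumes "k \<ge> 1"
  shows "\<bar>sph d u k\<bar> \<le> \<bar>sin (2 * pi * u 0)\<bar>"
proof -
  have P: "\<bar>\<Prod>l\<in>S. sin (pi * u l)\<bar> \<le> 1" for S :: "nat set"
    unfolding abs_prod by (rule prod_le_1) auto
  have "\<bar>sin (2 * pi * u 0) * (\<Prod>l\<in>S. sin (pi * u l)) * c\<bar> \<le> \<bar>sin (2 * pi * u 0)\<bar>"
    if "\<bar>c\<bar> \<le> 1" for S c
    using P[of S] that unfolding abs_mult by (metis abs_ge_zero mult.assoc mult_le_one mult_left_le)
  from this[of "cos (pi * u k)"] this[of 1] show ?thesis using assms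
    by (auto simp: sph_def)
qed

lemma countable_cos_eq: "countable {t::real. cos (2 * pi * t) = c}"
proof (cases "\<exists>y. cos y = c")
  case False then show ?thesis by auto
next
  case True
  then obtain y where y: "cos y = c" by auto
  have "{t::real. cos (2 * pi * t) = c} \<subseteq> (\<lambda>n. (y + 2 * n * pi) / (2*pi)) ` \<int> \<union> (\<lambda>n. (-y + 2 * n * pi) / (2*pi)) ` \<int>"
  proof
    fix t assume "t \<in> {t::real. cos (2 * pi * t) = c}"
    then have "cos (2*pi*t) = cos y" using y by simp
    then obtain n where n: "n \<in> \<int>" "2*pi*t = y + 2*n*pi \<or> 2*pi*t = -y + 2*n*pi" using cos_eq by blast
    then show "t \<in> (\<lambda>n. (y + 2 * n * pi) / (2*pi)) ` \<int> \<union> (\<lambda>n. (-y + 2 * n * pi) / (2*pi)) ` \<int>"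
      by (auto simp: field_simps)
  qed
  then show ?thesis by (meson countable_Un countable_image countable_int countable_subset)
qed

lemma countable_sin_eq: "countable {t::real. sin (2 * pi * t) = c}"
proof (cases "\<exists>y. sin y = c")
  case False then show ?thesis by auto
next
  case True
  then obtain y where y: "sin y = c" by auto
  have "{t::real. sin (2 * pi * t) = c} \<subseteq> (\<lambda>n. (y + 2 * n * pi) / (2*pi)) ` \<int> \<union> (\<lambda>n. (-y + (2 * n + 1) * pi) / (2*pi)) ` \<int>"
  proof
    fix t assume "t \<in> {t::real. sin (2 * pi * t) = c}"
    then have "sin (2*pi*t) = sin y" using y by simp
    then obtain n where n: "n \<in> \<int>" "2*pi*t = y + 2*n*pi \<or> 2*pi*t = -y + (2*n+1)*pi" using sin_eq by blast
    then show "t \<in> (\<lambda>n. (y + 2 * n * pi) / (2*pi)) ` \<int> \<union> (\<lambda>n. (-y + (2 * n + 1) * pi) / (2*pi)) ` \<int>"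
      by (auto simp: field_simps)
  qed
  then show ?thesis by (meson countable_Un countable_image countable_int countable_subset)
qed

lemma countable_cos_zero_comp:
  assumes "\<And>c. countable {t::real. \<phi> t = c}"
  shows "countable {t::real. cos ((\<alpha>::real) * \<phi> t) = 0}"
proof (cases "\<alpha> = 0")
  case True then show ?thesis by simp
next
  case False
  have "{t::real. cos (\<alpha> * \<phi> t) = 0} \<subseteq> (\<Union>i\<in>(UNIV::int set). {t. \<phi> t = of_int i * (pi/2) / \<alpha>})"
    using False by (auto simp: cos_zero_iff_int field_simps)
  moreover have "countable (\<Union>i\<in>(UNIV::int set). {t. \<phi> t = of_int i * (pi/2) / \<alpha>})"
    using assms by (intro countable_UN) auto
  ultimately show ?thesis by (metis countable_subset)
qed

lemma Re_exp_iz: "Re (exp (\<i> * z * complex_of_real y)) = exp (- Im z * y) * cos (Re z * y)"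
  by (simp add: Re_exp)

lemma core:
  fixes g :: "'a \<Rightarrow> complex" and h :: "'b \<Rightarrow> real"
  assumes P: "prob_space M" and Xm: "X \<in> measurable M N"
    and gm: "g \<in> borel_measurable M" and gb: "\<forall>\<omega>\<in>space M. cmod (g \<omega>) \<le> B"
    and hm: "h \<in> borel_measurable N" and hb: "\<forall>x. \<bar>h x\<bar> \<le> 1"
    and AE0: "AE \<omega> in M. cplx_cond_exp M (vimage_algebra (space M) X N) g \<omega> = 0"
  shows "(\<integral>\<omega>. h (X \<omega>) * Re (w * g \<omega>) \<partial>M) = 0"
proof -
  interpret prob_space M by fact
  let ?F = "vimage_algebra (space M) X N"
  have sub: "subalgebra M ?F" unfolding subalgebra_def
    using sets_image_in_sets[OF refl Xm] by simp
  interpret fs: finite_measure_subalgebra M ?F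
    by unfold_locales (rule sub)
  have XS: "X \<in> space M \<rightarrow> space N" using measurable_space[OF Xm] by auto
  have hF: "(\<lambda>\<omega>. h (X \<omega>)) \<in> borel_measurable ?F"
    using measurable_comp[OF measurable_vimage_algebra1[OF XS] hm] by (simp add: comp_def)
  have hM: "(\<lambda>\<omega>. h (X \<omega>)) \<in> borel_measurable M"
    using measurable_comp[OF Xm hm] by (simp add: comp_def)
  have key: "(\<integral>\<omega>. h (X \<omega>) * q (g \<omega>) \<partial>M) = 0"
    if qm: "q \<in> borel_measurable borel" and qb: "\<And>c. \<bar>q c\<bar> \<le> cmod c"
      and q0: "AE \<omega> in M. real_cond_exp M ?F (\<lambda>y. q (g y)) \<omega> = 0" for q :: "complex \<Rightarrow> real"
  proof -
    have qg: "(\<lambda>y. q (g y)) \<in> borel_measurable M" using measurable_comp[OF gm qm] by (simp add: comp_def)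
    have int: "integrable M (\<lambda>\<omega>. h (X \<omega>) * q (g \<omega>))"
    proof (rule integrable_const_bound[where B=B])
      show "AE x in M. norm (h (X x) * q (g x)) \<le> B"
      proof (rule AE_I2)
        fix x assume "x \<in> space M"
        then have "\<bar>q (g x)\<bar> \<le> B" using gb qb[of "g x"] by fastforce
        moreover have "\<bar>h (X x)\<bar> \<le> 1" using hb by simp
        ultimately show "norm (h (X x) * q (g x)) \<le> B"
          by (simp add: abs_mult) (metis abs_ge_zero mult_left_le_one_le order_trans mult.commute mult_mono)
      qed
    qed (use hM qg in simp)
    have "(\<integral>\<omega>. h (X \<omega>) * q (g \<omega>) \<partial>M) = (\<integral>\<omega>. h (X \<omega>) * real_cond_exp M ?F (\<lambda>y. q (g y)) \<omega> \<partial>M)"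
      using fs.real_cond_exp_intg(2)[OF int hF qg] by simp
    also have "\<dots> = 0"
      by (rule integral_eq_zero_AE) (use q0 in auto)
    finally show ?thesis .
  qed
  have AEre: "AE \<omega> in M. real_cond_exp M ?F (\<lambda>y. Re (g y)) \<omega> = 0"
    using AE0 by eventually_elim (simp add: cplx_cond_exp_def complex_eq_iff)
  have AEim: "AE \<omega> in M. real_cond_exp M ?F (\<lambda>y. Im (g y)) \<omega> = 0"
    using AE0 by eventually_elim (simp add: cplx_cond_exp_def complex_eq_iff)
  have I1: "(\<integral>\<omega>. h (X \<omega>) * Re (g \<omega>) \<partial>M) = 0"
    by (rule key[of Re]) (use AEre abs_Re_le_cmod in auto)
  have I2: "(\<integral>\<omega>. h (X \<omega>) * Im (g \<omega>) \<partial>M) = 0"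
    by (rule key[of Im]) (use AEim abs_Im_le_cmod in auto)
  have int2: "integrable M (\<lambda>\<omega>. h (X \<omega>) * q (g \<omega>))"
    if "q \<in> borel_measurable borel" "\<And>c. \<bar>q c\<bar> \<le> cmod c" for q :: "complex \<Rightarrow> real"
  proof (rule integrable_const_bound[where B=B])
    show "AE x in M. norm (h (X x) * q (g x)) \<le> B"
    proof (rule AE_I2)
      fix x assume "x \<in> space M"
      then have "\<bar>q (g x)\<bar> \<le> B" using gb that(2)[of "g x"] by fastforce
      moreover have "\<bar>h (X x)\<bar> \<le> 1" using hb by simp
      ultimately show "norm (h (X x) * q (g x)) \<le> B"
        by (simp add: abs_mult) (metis abs_ge_zero mult_left_le_one_le order_trans mult.commute mult_mono)
    qed
  qed (use hM measurable_comp[OF gm that(1)] in \<open>simp add: comp_def\<close>)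
  have iRe: "integrable M (\<lambda>\<omega>. h (X \<omega>) * Re (g \<omega>))" by (rule int2) (auto simp: abs_Re_le_cmod)
  have iIm: "integrable M (\<lambda>\<omega>. h (X \<omega>) * Im (g \<omega>))" by (rule int2) (auto simp: abs_Im_le_cmod)
  have "(\<integral>\<omega>. h (X \<omega>) * Re (w * g \<omega>) \<partial>M)
      = (\<integral>\<omega>. Re w * (h (X \<omega>) * Re (g \<omega>)) - Im w * (h (X \<omega>) * Im (g \<omega>)) \<partial>M)"
    by (rule Bochner_Integration.integral_cong) (auto simp: algebra_simps)
  also have "\<dots> = Re w * (\<integral>\<omega>. h (X \<omega>) * Re (g \<omega>) \<partial>M) - Im w * (\<integral>\<omega>. h (X \<omega>) * Im (g \<omega>) \<partial>M)"
    using iRe iIm by simp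
  finally show ?thesis using I1 I2 by simp
qed

lemma null_U0:
  fixes d :: nat and U :: "'a \<Rightarrow> nat \<Rightarrow> real"
  assumes dist: "distributed M (PiM {..<d-1} (\<lambda>_. lborel)) U f" and d: "d \<ge> 2" and Z: "countable (Z :: real set)"
  shows "AE \<omega> in M. U \<omega> 0 \<notin> Z"
proof -
  let ?N = "PiM {..<d-1} (\<lambda>_. lborel :: real measure)"
  interpret product_sigma_finite "\<lambda>_. lborel :: real measure" by standard
  let ?A = "\<lambda>i::nat. if i = 0 then Z else (UNIV :: real set)"
  have Zs: "Z \<in> sets lborel" using countable_imp_null_set_lborel[OF Z] by auto
  have Asets: "\<And>i. i \<in> {..<d-1} \<Longrightarrow> ?A i \<in> sets lborel" using Zs by auto
  have "emeasure ?N (PiE {..<d-1} ?A) = (\<Prod>i<d-1. emeasure lborel (?A i))"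
    by (rule emeasure_PiM) (use Asets in auto)
  also have "\<dots> = 0"
  proof (rule prod_zero)
    show "\<exists>i\<in>{..<d-1}. emeasure lborel (?A i) = 0"
      using d countable_imp_null_set_lborel[OF Z] by (intro bexI[of _ 0]) auto
  qed simp
  finally have null: "PiE {..<d-1} ?A \<in> null_sets ?N"
    using Asets by (auto intro!: sets_PiM_I_finite)
  have "AE x in ?N. x 0 \<notin> Z"
    by (rule AE_I'[OF null]) (use d in \<open>auto simp: space_PiM PiE_iff extensional_def\<close>)
  then have "AE x in density ?N f. x 0 \<notin> Z"
    by (subst AE_density[OF distributed_borel_measurable[OF dist]]) auto
  then have "AE x in distr M ?N U. x 0 \<notin> Z"
    unfolding distributed_distr_eq_density[OF dist] .
  then show ?thesis by (rule AE_distrD[OF distributed_measurable[OF dist]])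
qed

lemma pos_box:
  assumes dist: "distributed M N U f" and B: "B \<in> sets N" and fpos: "\<forall>u\<in>B. f u > 0"
    and Bpos: "emeasure N B \<noteq> 0" and AE: "AE \<omega> in M. U \<omega> \<notin> B"
  shows False
proof -
  have Um: "U \<in> measurable M N" by (rule distributed_measurable[OF dist])
  have fm: "f \<in> borel_measurable N" by (rule distributed_borel_measurable[OF dist])
  have "emeasure M (U -` B \<inter> space M) = 0"
    using AE by (subst (asm) AE_iff_measurable[of "U -` B \<inter> space M"]) (use Um B in auto)
  then have "(\<integral>\<^sup>+x. f x * indicator B x \<partial>N) = 0"
    using distributed_emeasure[OF dist B] by simp
  then have "AE x in N. f x * indicator B x = 0"
    by (subst (asm) nn_integral_0_iff_AE) (use fm B in auto)
  then have "AE x in N. x \<notin> B"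
    by eventually_elim (use fpos in \<open>auto simp: indicator_def split: if_splits\<close>)
  then have "emeasure N B = 0"
    by (subst (asm) AE_iff_measurable[of B]) (use B sets.sets_into_space[OF B] in auto)
  with Bpos show False by simp
qed

lemma sph_meas:
  assumes "d \<ge> 2" shows "(\<lambda>u. sph d u k) \<in> borel_measurable (PiM {..<d-1} (\<lambda>_. lborel))"
proof -
  have c[measurable]: "l < d-1 \<Longrightarrow> (\<lambda>u::nat\<Rightarrow>real. u l) \<in> borel_measurable (PiM {..<d-1} (\<lambda>_. lborel))" for l
    using measurable_component_singleton[of l "{..<d-1}" "\<lambda>_. lborel"] by simp
  have p: "(\<lambda>u::nat\<Rightarrow>real. \<Prod>l\<in>{1..<j}. sin (pi * u l)) \<in> borel_measurable (PiM {..<d-1} (\<lambda>_. lborel))"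
    if "j \<le> d-1" for j
  proof (rule borel_measurable_prod)
    fix l assume "l \<in> {1..<j}"
    then have "l < d-1" using that by auto
    then show "(\<lambda>u::nat\<Rightarrow>real. sin (pi * u l)) \<in> borel_measurable (PiM {..<d-1} (\<lambda>_. lborel))"
      by measurable
  qed
  show ?thesis
  proof (cases "k = 0")
    case True
    show ?thesis
    proof (cases "0 < d - 1")
      case True
      have [measurable]: "(\<lambda>u::nat\<Rightarrow>real. u 0) \<in> borel_measurable (PiM {..<d-1} (\<lambda>_. lborel))"
        using c[of 0] True by simp
      have "(\<lambda>u. sph d u k) = (\<lambda>u. cos (2 * pi * u 0))" using \<open>k = 0\<close> by (simp add: sph_def fun_eq_iff)
      then show ?thesis by (simp only:) measurable
    next
      case False then show ?thesis using \<open>d \<ge> 2\<close> by simp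
    qed
  next
    case k: False
    show ?thesis
    proof (cases "k < d - 1")
      case True
      have "0 < d - 1" using True by auto
      have [measurable]: "(\<lambda>u::nat\<Rightarrow>real. \<Prod>l\<in>{1..<k}. sin (pi * u l)) \<in> borel_measurable (PiM {..<d-1} (\<lambda>_. lborel))"
        using p[of k] True by simp
      have [measurable]: "(\<lambda>u::nat\<Rightarrow>real. u 0) \<in> borel_measurable (PiM {..<d-1} (\<lambda>_. lborel))"
        using c[of 0] \<open>0 < d - 1\<close> by simp
      have [measurable]: "(\<lambda>u::nat\<Rightarrow>real. u k) \<in> borel_measurable (PiM {..<d-1} (\<lambda>_. lborel))"
        using c[of k] True by simp
      have "(\<lambda>u. sph d u k) = (\<lambda>u. sin (2 * pi * u 0) * (\<Prod>l\<in>{1..<k}. sin (pi * u l)) * cos (pi * u k))"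
        using k True by (simp add: sph_def fun_eq_iff)
      then show ?thesis by (simp only:) measurable
    next
      case False
      show ?thesis
      proof (cases "k = d - 1")
        case True
        have "0 < d - 1" using True k by auto
        have [measurable]: "(\<lambda>u::nat\<Rightarrow>real. \<Prod>l\<in>{1..<d-1}. sin (pi * u l)) \<in> borel_measurable (PiM {..<d-1} (\<lambda>_. lborel))"
          using p[of "d-1"] by simp
        have [measurable]: "(\<lambda>u::nat\<Rightarrow>real. u 0) \<in> borel_measurable (PiM {..<d-1} (\<lambda>_. lborel))"
          using c[of 0] \<open>0 < d - 1\<close> by simp
        have "(\<lambda>u. sph d u k) = (\<lambda>u. sin (2 * pi * u 0) * (\<Prod>l\<in>{1..<d-1}. sin (pi * u l)))"
          using k True by (simp add: sph_def fun_eq_iff)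
        then show ?thesis by (simp only:) measurable
      next
        case False
        then show ?thesis using k \<open>\<not> k < d - 1\<close> unfolding sph_def by simp
      qed
    qed
  qed
qed

lemma core2:
  fixes g :: "'a \<Rightarrow> complex" and h :: "'b \<Rightarrow> real"
  assumes P: "prob_space M" and Xm: "X \<in> measurable M N"
    and gm: "g \<in> borel_measurable M" and gb: "\<forall>\<omega>\<in>space M. cmod (g \<omega>) \<le> B"
    and hm: "h \<in> borel_measurable N" and hb: "\<forall>x. \<bar>h x\<bar> \<le> 1"
    and AE0: "AE \<omega> in M. cplx_cond_exp M (vimage_algebra (space M) X N) g \<omega> = 0"
    and nn: "\<forall>\<omega>\<in>space M. 0 \<le> h (X \<omega>) * Re (w * g \<omega>)"
  shows "AE \<omega> in M. h (X \<omega>) * Re (w * g \<omega>) = 0"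
proof -
  interpret prob_space M by fact
  have I: "(\<integral>\<omega>. h (X \<omega>) * Re (w * g \<omega>) \<partial>M) = 0"
    by (rule core[OF P Xm gm gb hm hb AE0])
  have hM: "(\<lambda>\<omega>. h (X \<omega>)) \<in> borel_measurable M"
    using measurable_comp[OF Xm hm] by (simp add: comp_def)
  have int: "integrable M (\<lambda>\<omega>. h (X \<omega>) * Re (w * g \<omega>))"
  proof (rule integrable_const_bound[where B="cmod w * B"])
    show "AE x in M. norm (h (X x) * Re (w * g x)) \<le> cmod w * B"
    proof (rule AE_I2)
      fix x assume x: "x \<in> space M"
      have "\<bar>Re (w * g x)\<bar> \<le> cmod w * B"
        using abs_Re_le_cmod[of "w * g x"] gb x
        by (metis norm_mult mult_left_mono norm_ge_zero order_trans)
      moreover have "\<bar>h (X x)\<bar> \<le> 1" using hb by simp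
      ultimately show "norm (h (X x) * Re (w * g x)) \<le> cmod w * B"
        by (simp add: abs_mult) (metis abs_ge_zero mult_left_le_one_le order_trans)
    qed
  qed (use hM gm in simp)
  show ?thesis using I integral_nonneg_eq_0_iff_AE[OF int] nn by (simp add: AE_I2)
qed

lemma common_meas:
  fixes U :: "'a \<Rightarrow> nat \<Rightarrow> real"
  assumes d: "d \<ge> 2" and dist: "distributed M (PiM {..<d-1} (\<lambda>_. lborel)) U f"
  shows "(\<lambda>\<omega>. sph d (U \<omega>) k) \<in> borel_measurable M"
  using measurable_compose[OF distributed_measurable[OF dist] sph_meas[OF d]] .

lemma part1:
  fixes M :: "'a measure" and d :: nat
    and U :: "'a \<Rightarrow> (nat \<Rightarrow> real)" and f :: "(nat \<Rightarrow> real) \<Rightarrow> ennreal"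
    and C :: "nat \<Rightarrow> real" and R :: real
    and X1 :: "'a \<Rightarrow> real" and X2 :: "'a \<Rightarrow> (nat \<Rightarrow> real)" and z :: complex
  assumes P: "prob_space M"
    and d: "d \<ge> 2"
    and R: "R > 0"
    and dist: "distributed M (PiM {..<d-1} (\<lambda>_. lborel)) U f"
    and X1_def: "X1 = (\<lambda>\<omega>. C 0 + R * sph d (U \<omega>) 0)"
    and X2_def: "X2 = (\<lambda>\<omega>. \<lambda>k\<in>{..<d-1}. C (Suc k) + R * sph d (U \<omega>) (Suc k))"
  shows "\<not> (AE \<omega> in M.
            cplx_cond_exp M (vimage_algebra (space M) X2 (PiM {..<d-1} (\<lambda>_. borel)))
              (\<lambda>\<omega>'. exp (\<i> * z * complex_of_real (X1 \<omega>'))) \<omega> = 0)"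
proof
  assume AE0: "AE \<omega> in M.
            cplx_cond_exp M (vimage_algebra (space M) X2 (PiM {..<d-1} (\<lambda>_. borel)))
              (\<lambda>\<omega>'. exp (\<i> * z * complex_of_real (X1 \<omega>'))) \<omega> = 0"
  interpret prob_space M by (rule P)
  have sphm[measurable]: "\<And>k. (\<lambda>\<omega>. sph d (U \<omega>) k) \<in> borel_measurable M"
    by (rule common_meas[OF d dist])
  have X1m[measurable]: "X1 \<in> borel_measurable M" unfolding X1_def by measurable
  have X2m: "X2 \<in> measurable M (PiM {..<d-1} (\<lambda>_. borel))" unfolding X2_def
    by (rule measurable_restrict) measurable
  define a where "a = Re z"
  define b where "b = Im z"
  define Y where "Y = (\<lambda>\<omega>. R * sph d (U \<omega>) 0)"
  define w where "w = exp (- (\<i> * z * complex_of_real (C 0)))"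
  define g where "g = (\<lambda>\<omega>. exp (\<i> * z * complex_of_real (X1 \<omega>)))"
  define h where "h = (\<lambda>v::nat\<Rightarrow>real. sgn (cos (a * sqrt (R\<^sup>2 - (\<Sum>k<d-1. (v k - C (Suc k))\<^sup>2)))))"
  have hm: "h \<in> borel_measurable (PiM {..<d-1} (\<lambda>_. borel))" unfolding h_def by measurable
  have hb: "\<forall>x. \<bar>h x\<bar> \<le> 1" unfolding h_def by (simp add: abs_sgn_eq)
  have gm: "g \<in> borel_measurable M" unfolding g_def by measurable
  have gb: "\<forall>\<omega>\<in>space M. cmod (g \<omega>) \<le> exp (\<bar>b\<bar> * (\<bar>C 0\<bar> + R))"
  proof
    fix \<omega> assume "\<omega> \<in> space M"
    have c1: "\<bar>sph d (U \<omega>) 0\<bar> \<le> 1" by (simp add: sph_def)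
    have "\<bar>X1 \<omega>\<bar> \<le> \<bar>C 0\<bar> + R"
      using c1 R unfolding X1_def
      by (metis abs_mult abs_of_pos abs_triangle_ineq mult_left_le add_left_mono less_imp_le order_trans)
    then have "- b * X1 \<omega> \<le> \<bar>b\<bar> * (\<bar>C 0\<bar> + R)"
      by (metis abs_ge_zero abs_ge_minus_self abs_mult abs_minus_cancel mult_left_mono order_trans mult_minus_left)
    then show "cmod (g \<omega>) \<le> exp (\<bar>b\<bar> * (\<bar>C 0\<bar> + R))"
      unfolding g_def b_def by simp
  qed
  have pw: "h (X2 \<omega>) * Re (w * g \<omega>) = exp (- b * Y \<omega>) * \<bar>cos (a * Y \<omega>)\<bar>" if \<omega>: "\<omega> \<in> space M" for \<omega>
  proof -
    have "w * g \<omega> = exp (\<i> * z * complex_of_real (Y \<omega>))"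
      unfolding w_def g_def X1_def Y_def by (simp add: exp_add[symmetric] algebra_simps)
    then have re: "Re (w * g \<omega>) = exp (- b * Y \<omega>) * cos (a * Y \<omega>)"
      by (simp add: Re_exp_iz a_def b_def)
    have "(\<Sum>k<d-1. (X2 \<omega> k - C (Suc k))\<^sup>2) = (\<Sum>k<d-1. R\<^sup>2 * (sph d (U \<omega>) (Suc k))\<^sup>2)"
      unfolding X2_def by (rule sum.cong) (auto simp: power_mult_distrib)
    also have "\<dots> = R\<^sup>2 * (1 - (sph d (U \<omega>) 0)\<^sup>2)"
      using sph_sq_sum[OF d, of "U \<omega>"] by (simp add: sum_distrib_left[symmetric])
    finally have "R\<^sup>2 - (\<Sum>k<d-1. (X2 \<omega> k - C (Suc k))\<^sup>2) = (Y \<omega>)\<^sup>2"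
      unfolding Y_def by (simp add: algebra_simps power_mult_distrib)
    then have "h (X2 \<omega>) = sgn (cos (a * \<bar>Y \<omega>\<bar>))" unfolding h_def by simp
    also have "cos (a * \<bar>Y \<omega>\<bar>) = cos (a * Y \<omega>)"
      by (cases "Y \<omega> \<ge> 0") (auto simp: abs_if)
    finally show ?thesis using re
      by (simp add: abs_sgn mult.left_commute sgn_mult_self_eq abs_mult_self_eq)
  qed
  have nn: "\<forall>\<omega>\<in>space M. 0 \<le> h (X2 \<omega>) * Re (w * g \<omega>)"
    using pw by simp
  have AE0': "AE \<omega> in M. cplx_cond_exp M (vimage_algebra (space M) X2 (PiM {..<d-1} (\<lambda>_. borel))) g \<omega> = 0"
    using AE0 by (simp add: g_def)
  have AE1: "AE \<omega> in M. h (X2 \<omega>) * Re (w * g \<omega>) = 0"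
    apply (rule core2[where M=M and X=X2 and g=g and h=h and w=w])
    apply (rule P)
    apply (rule X2m)
    apply (rule gm)
    apply (rule gb)
    apply (rule hm)
    apply (rule hb)
    apply (rule AE0')
    apply (rule nn)
    done
  have AE2: "AE \<omega> in M. cos (a * Y \<omega>) = 0"
    using AE1 AE_space
  proof eventually_elim
    case (elim \<omega>)
    have "exp (- b * Y \<omega>) * \<bar>cos (a * Y \<omega>)\<bar> = 0" using elim(1) unfolding pw[OF elim(2)] .
    then show ?case by simp
  qed
  have cnt: "countable {t::real. cos ((a * R) * cos (2 * pi * t)) = 0}"
    by (rule countable_cos_zero_comp) (rule countable_cos_eq)
  have AE3: "AE \<omega> in M. U \<omega> 0 \<notin> {t::real. cos ((a * R) * cos (2 * pi * t)) = 0}"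
    by (rule null_U0[OF dist d cnt])
  have "AE \<omega> in M. False"
    using AE2 AE3 by eventually_elim (simp add: Y_def sph_def algebra_simps)
  then show False by (simp add: AE_False)
qed

lemma part2:
  fixes M :: "'a measure" and d :: nat
    and U :: "'a \<Rightarrow> (nat \<Rightarrow> real)" and f :: "(nat \<Rightarrow> real) \<Rightarrow> ennreal"
    and C :: "nat \<Rightarrow> real" and R :: real
    and X1 :: "'a \<Rightarrow> real" and X2 :: "'a \<Rightarrow> (nat \<Rightarrow> real)" and z :: "nat \<Rightarrow> complex"
  assumes P: "prob_space M"
    and d: "d \<ge> 2"
    and R: "R > 0"
    and dist: "distributed M (PiM {..<d-1} (\<lambda>_. lborel)) U f"
    and f_pos: "d > 2 \<longrightarrow> (\<exists>\<gamma>>0. \<forall>u\<in>PiE {..<d-1} (\<lambda>_. {0<..<\<gamma>}). f u > 0)"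
    and X1_def: "X1 = (\<lambda>\<omega>. C 0 + R * sph d (U \<omega>) 0)"
    and X2_def: "X2 = (\<lambda>\<omega>. \<lambda>k\<in>{..<d-1}. C (Suc k) + R * sph d (U \<omega>) (Suc k))"
  shows "\<not> (AE \<omega> in M.
            cplx_cond_exp M (vimage_algebra (space M) X1 borel)
              (\<lambda>\<omega>'. exp (\<i> * (\<Sum>k<d-1. z k * complex_of_real (X2 \<omega>' k)))) \<omega> = 0)"
proof
  define g where "g = (\<lambda>\<omega>'. exp (\<i> * (\<Sum>k<d-1. z k * complex_of_real (X2 \<omega>' k))))"
  assume "AE \<omega> in M. cplx_cond_exp M (vimage_algebra (space M) X1 borel)
              (\<lambda>\<omega>'. exp (\<i> * (\<Sum>k<d-1. z k * complex_of_real (X2 \<omega>' k)))) \<omega> = 0"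
  then have AE0: "AE \<omega> in M. cplx_cond_exp M (vimage_algebra (space M) X1 borel) g \<omega> = 0"
    by (simp add: g_def)
  interpret prob_space M by (rule P)
  have sphm[measurable]: "\<And>k. (\<lambda>\<omega>. sph d (U \<omega>) k) \<in> borel_measurable M"
    by (rule common_meas[OF d dist])
  have X1m[measurable]: "X1 \<in> borel_measurable M" unfolding X1_def by measurable
  define Cz where "Cz = (\<Sum>k<d-1. z k * complex_of_real (C (Suc k)))"
  define \<zeta> where "\<zeta> = (\<lambda>\<omega>. \<Sum>k<d-1. z k * complex_of_real (R * sph d (U \<omega>) (Suc k)))"
  define w where "w = exp (- (\<i> * Cz))"
  have g_eq: "g = (\<lambda>\<omega>. exp (\<i> * (\<Sum>k<d-1. z k * complex_of_real (C (Suc k) + R * sph d (U \<omega>) (Suc k)))))"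
    unfolding g_def X2_def by (intro ext arg_cong[where f=exp] arg_cong[where f="\<lambda>x. \<i> * x"] sum.cong) auto
  have wg: "w * g \<omega> = exp (\<i> * \<zeta> \<omega>)" for \<omega>
  proof -
    have "(\<Sum>k<d-1. z k * complex_of_real (C (Suc k) + R * sph d (U \<omega>) (Suc k))) = Cz + \<zeta> \<omega>"
      unfolding Cz_def \<zeta>_def by (simp add: distrib_left sum.distrib)
    then show ?thesis unfolding w_def g_eq by (simp add: exp_add[symmetric] algebra_simps)
  qed
  have gm: "g \<in> borel_measurable M" unfolding g_eq by measurable
  define K where "K = (\<Sum>k<d-1. cmod (z k) * (\<bar>C (Suc k)\<bar> + R))"
  have gb: "\<forall>\<omega>\<in>space M. cmod (g \<omega>) \<le> exp K"
  proof
    fix \<omega> assume "\<omega> \<in> space M"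
    let ?S = "(\<Sum>k<d-1. z k * complex_of_real (C (Suc k) + R * sph d (U \<omega>) (Suc k)))"
    have "cmod ?S \<le> (\<Sum>k<d-1. cmod (z k * complex_of_real (C (Suc k) + R * sph d (U \<omega>) (Suc k))))"
      by (rule norm_sum)
    also have "\<dots> \<le> K" unfolding K_def
    proof (rule sum_mono)
      fix k assume "k \<in> {..<d-1}"
      have "\<bar>sph d (U \<omega>) (Suc k)\<bar> \<le> 1"
        using sph_abs_le[of "Suc k" d "U \<omega>"] abs_sin_le_one[of "2 * pi * U \<omega> 0"] by linarith
      then have "\<bar>C (Suc k) + R * sph d (U \<omega>) (Suc k)\<bar> \<le> \<bar>C (Suc k)\<bar> + R"
        using R by (metis abs_mult abs_of_pos abs_triangle_ineq mult_left_le add_left_mono less_imp_le order_trans)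
      then show "cmod (z k * complex_of_real (C (Suc k) + R * sph d (U \<omega>) (Suc k))) \<le> cmod (z k) * (\<bar>C (Suc k)\<bar> + R)"
        unfolding norm_mult norm_of_real by (rule mult_left_mono) auto
    qed
    finally have "cmod ?S \<le> K" .
    then have "- Im ?S \<le> K" using abs_Im_le_cmod[of ?S] by linarith
    then show "cmod (g \<omega>) \<le> exp K" unfolding g_eq by simp
  qed
  have X1C: "(X1 \<omega> - C 0) / R = cos (2 * pi * U \<omega> 0)" for \<omega>
    unfolding X1_def using R by (simp add: sph_def)
  show False
  proof (cases "d = 2")
    case True
    define a where "a = Re (z 0)"
    define b where "b = Im (z 0)"
    define Y where "Y = (\<lambda>\<omega>. R * sin (2 * pi * U \<omega> 0))"
    define h where "h = (\<lambda>x::real. sgn (cos (a * sqrt (R\<^sup>2 - (x - C 0)\<^sup>2))))"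
    have hm: "h \<in> borel_measurable borel" unfolding h_def by measurable
    have hb: "\<forall>x. \<bar>h x\<bar> \<le> 1" unfolding h_def by (simp add: abs_sgn_eq)
    have pw: "h (X1 \<omega>) * Re (w * g \<omega>) = exp (- b * Y \<omega>) * \<bar>cos (a * Y \<omega>)\<bar>" for \<omega>
    proof -
      have "\<zeta> \<omega> = z 0 * complex_of_real (Y \<omega>)" unfolding \<zeta>_def Y_def using True by (simp add: sph_def)
      then have re: "Re (w * g \<omega>) = exp (- b * Y \<omega>) * cos (a * Y \<omega>)"
        unfolding wg using Re_exp_iz[of "z 0" "Y \<omega>"] by (simp add: a_def b_def mult.assoc)
      have "(X1 \<omega> - C 0)\<^sup>2 = R\<^sup>2 * (cos (2 * pi * U \<omega> 0))\<^sup>2"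
        unfolding X1_def by (simp add: sph_def power_mult_distrib)
      then have "R\<^sup>2 - (X1 \<omega> - C 0)\<^sup>2 = (Y \<omega>)\<^sup>2"
        unfolding Y_def by (simp add: power_mult_distrib cos_squared_eq algebra_simps)
      then have "h (X1 \<omega>) = sgn (cos (a * \<bar>Y \<omega>\<bar>))" unfolding h_def by simp
      also have "cos (a * \<bar>Y \<omega>\<bar>) = cos (a * Y \<omega>)"
        by (cases "Y \<omega> \<ge> 0") (auto simp: abs_if)
      finally show ?thesis using re
        by (simp add: abs_sgn mult.left_commute sgn_mult_self_eq abs_mult_self_eq)
    qed
    have nn: "\<forall>\<omega>\<in>space M. 0 \<le> h (X1 \<omega>) * Re (w * g \<omega>)"
      using pw by simp
    have AE1: "AE \<omega> in M. h (X1 \<omega>) * Re (w * g \<omega>) = 0"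
      apply (rule core2[where M=M and X=X1 and g=g and h=h and w=w])
      apply (rule P)
      apply (rule X1m)
      apply (rule gm)
      apply (rule gb)
      apply (rule hm)
      apply (rule hb)
      apply (rule AE0)
      apply (rule nn)
      done
    have AE2: "AE \<omega> in M. cos (a * Y \<omega>) = 0"
      using AE1
    proof eventually_elim
      case (elim \<omega>)
      have "exp (- b * Y \<omega>) * \<bar>cos (a * Y \<omega>)\<bar> = 0" using elim(1) unfolding pw .
      then show ?case by simp
    qed
    have cnt: "countable {t::real. cos ((a * R) * sin (2 * pi * t)) = 0}"
      by (rule countable_cos_zero_comp) (rule countable_sin_eq)
    have AE3: "AE \<omega> in M. U \<omega> 0 \<notin> {t::real. cos ((a * R) * sin (2 * pi * t)) = 0}"
      by (rule null_U0[OF dist d cnt])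
    have "AE \<omega> in M. False"
      using AE2 AE3 by eventually_elim (simp add: Y_def algebra_simps)
    then show False by (simp add: AE_False)
  next
    case False
    then have "d > 2" using d by simp
    then obtain \<gamma> where \<gamma>: "\<gamma> > 0" and fpos: "\<forall>u\<in>PiE {..<d-1} (\<lambda>_. {0<..<\<gamma>}). f u > 0"
      using f_pos by blast
    define Zs where "Zs = (\<Sum>k<d-1. cmod (z k))"
    have Zs0: "Zs \<ge> 0" unfolding Zs_def by (simp add: sum_nonneg)
    define \<delta> where "\<delta> = 1 / (R * (Zs + 1))"
    have \<delta>0: "\<delta> > 0" unfolding \<delta>_def using R Zs0 by simp
    have "Zs * R * \<delta> = (Zs * R) / (R * (Zs + 1))" unfolding \<delta>_def by simp
    also have "\<dots> < 1"
    proof (subst divide_less_eq_1_pos)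
      show "0 < R * (Zs + 1)" using R Zs0 by simp
      show "Zs * R < R * (Zs + 1)" using R by (simp add: algebra_simps)
    qed
    finally have Zd: "Zs * R * \<delta> < 1" .
    define cond where "cond = (\<lambda>x::real. (x - C 0) / R > 0 \<and> ((x - C 0) / R)\<^sup>2 > 1 - \<delta>\<^sup>2)"
    define h where "h = (\<lambda>x::real. if cond x then 1 else (0::real))"
    have hm: "h \<in> borel_measurable borel" unfolding h_def cond_def by measurable
    have hb: "\<forall>x. \<bar>h x\<bar> \<le> 1" unfolding h_def by simp
    have repos: "Re (w * g \<omega>) > 0" if c: "cond (X1 \<omega>)" for \<omega>
    proof -
      let ?c = "cos (2 * pi * U \<omega> 0)" and ?s = "sin (2 * pi * U \<omega> 0)"
      have "?c\<^sup>2 > 1 - \<delta>\<^sup>2" using c unfolding cond_def X1C by simp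
      then have "?s\<^sup>2 < \<delta>\<^sup>2" using sin_squared_eq[of "2 * pi * U \<omega> 0"] by linarith
      then have s\<delta>: "\<bar>?s\<bar> < \<delta>" using \<delta>0
        by (metis power2_abs power_less_imp_less_base less_imp_le)
      have "cmod (\<zeta> \<omega>) \<le> (\<Sum>k<d-1. cmod (z k * complex_of_real (R * sph d (U \<omega>) (Suc k))))"
        unfolding \<zeta>_def by (rule norm_sum)
      also have "\<dots> \<le> (\<Sum>k<d-1. cmod (z k) * (R * \<delta>))"
      proof (rule sum_mono)
        fix k assume "k \<in> {..<d-1}"
        have "\<bar>sph d (U \<omega>) (Suc k)\<bar> \<le> \<delta>"
          using sph_abs_le[of "Suc k" d "U \<omega>"] s\<delta> by simp
        then have "\<bar>R * sph d (U \<omega>) (Suc k)\<bar> \<le> R * \<delta>" using R by (simp add: abs_mult)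
        then show "cmod (z k * complex_of_real (R * sph d (U \<omega>) (Suc k))) \<le> cmod (z k) * (R * \<delta>)"
          unfolding norm_mult norm_of_real by (rule mult_left_mono) auto
      qed
      also have "\<dots> = Zs * R * \<delta>" unfolding Zs_def by (simp add: sum_distrib_right mult.assoc)
      finally have "cmod (\<zeta> \<omega>) < 1" using Zd by linarith
      then have "\<bar>Re (\<zeta> \<omega>)\<bar> < pi / 2" using abs_Re_le_cmod[of "\<zeta> \<omega>"] pi_gt3 by linarith
      then have "cos (Re (\<zeta> \<omega>)) > 0" by (intro cos_gt_zero_pi) auto
      then show ?thesis unfolding wg by (simp add: Re_exp)
    qed
    have nn: "\<forall>\<omega>\<in>space M. 0 \<le> h (X1 \<omega>) * Re (w * g \<omega>)"
      using repos by (auto simp: h_def less_imp_le)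
    have AE1: "AE \<omega> in M. h (X1 \<omega>) * Re (w * g \<omega>) = 0"
      apply (rule core2[where M=M and X=X1 and g=g and h=h and w=w])
      apply (rule P)
      apply (rule X1m)
      apply (rule gm)
      apply (rule gb)
      apply (rule hm)
      apply (rule hb)
      apply (rule AE0)
      apply (rule nn)
      done
    define \<epsilon> where "\<epsilon> = min \<gamma> (min (1/4) (\<delta> / (2 * pi)))"
    have \<epsilon>0: "\<epsilon> > 0" unfolding \<epsilon>_def using \<gamma> \<delta>0 by simp
    define B where "B = PiE {..<d-1} (\<lambda>_. {0<..<\<epsilon>})"
    have condB: "cond (X1 \<omega>)" if "U \<omega> \<in> B" for \<omega>
    proof -
      let ?t = "U \<omega> 0"
      have t: "0 < ?t" "?t < \<epsilon>" using that d unfolding B_def by (auto simp: PiE_iff)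
      have t1: "2 * pi * ?t < pi / 2" using t unfolding \<epsilon>_def by (simp add: field_simps)
      have t2: "2 * pi * ?t < \<delta>" using t pi_gt_zero unfolding \<epsilon>_def by (simp add: field_simps)
      have t0: "0 < 2 * pi * ?t" using t(1) by simp
      have cpos: "cos (2 * pi * ?t) > 0" using t0 t1 pi_gt_zero by (intro cos_gt_zero_pi) linarith+
      have "\<bar>sin (2 * pi * ?t)\<bar> < \<delta>"
        using abs_sin_x_le_abs_x[of "2 * pi * ?t"] t t2 by simp
      then have "(sin (2 * pi * ?t))\<^sup>2 < \<delta>\<^sup>2"
        by (metis abs_ge_zero power2_abs power_strict_mono zero_less_numeral)
      then have "(cos (2 * pi * ?t))\<^sup>2 > 1 - \<delta>\<^sup>2" using cos_squared_eq[of "2 * pi * ?t"] by linarith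
      then show ?thesis using cpos unfolding cond_def X1C by simp
    qed
    have AE2: "AE \<omega> in M. U \<omega> \<notin> B"
      using AE1 AE_space
    proof eventually_elim
      case (elim \<omega>)
      show ?case
      proof
        assume "U \<omega> \<in> B"
        then have "cond (X1 \<omega>)" by (rule condB)
        then have "h (X1 \<omega>) * Re (w * g \<omega>) > 0" using repos by (simp add: h_def)
        then show False using elim(1) by linarith
      qed
    qed
    interpret ps: product_sigma_finite "\<lambda>_. lborel :: real measure" by standard
    have Bsets: "B \<in> sets (PiM {..<d-1} (\<lambda>_. lborel))"
      unfolding B_def by (rule sets_PiM_I_finite) auto
    have fB: "\<forall>u\<in>B. f u > 0"
    proof
      fix u assume "u \<in> B"
      then have "u \<in> PiE {..<d-1} (\<lambda>_. {0<..<\<gamma>})"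
        unfolding B_def \<epsilon>_def by (auto simp: PiE_iff)
      then show "f u > 0" using fpos by blast
    qed
    have "emeasure (PiM {..<d-1} (\<lambda>_. lborel)) B = (\<Prod>i<d-1. emeasure lborel {0<..<\<epsilon>})"
      unfolding B_def by (rule ps.emeasure_PiM) auto
    also have "\<dots> = ennreal \<epsilon> ^ (d - 1)" using \<epsilon>0 by simp
    finally have Bpos: "emeasure (PiM {..<d-1} (\<lambda>_. lborel)) B \<noteq> 0" using \<epsilon>0 by simp
    show False by (rule pos_box[OF dist Bsets fB Bpos AE2])
  qed
qed

theorem lemma2p4:
  fixes M :: "'a measure" and d :: nat
    and U :: "'a \<Rightarrow> (nat \<Rightarrow> real)" and f :: "(nat \<Rightarrow> real) \<Rightarrow> ennreal"
    and C :: "nat \<Rightarrow> real" and R :: real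
    and X1 :: "'a \<Rightarrow> real" and X2 :: "'a \<Rightarrow> (nat \<Rightarrow> real)"
  assumes "prob_space M"
    and "d \<ge> 2"
    and "R > 0"
    and U_cube: "\<forall>\<omega>\<in>space M. U \<omega> \<in> PiE {..<d-1} (\<lambda>_. {0..1})"
    and U_dens: "distributed M (PiM {..<d-1} (\<lambda>_. lborel)) U f"
    and f_pos: "d > 2 \<longrightarrow> (\<exists>\<gamma>>0. \<forall>u\<in>PiE {..<d-1} (\<lambda>_. {0<..<\<gamma>}). f u > 0)"
    and X1_def: "X1 = (\<lambda>\<omega>. C 0 + R * sph d (U \<omega>) 0)"
    and X2_def: "X2 = (\<lambda>\<omega>. \<lambda>k\<in>{..<d-1}. C (Suc k) + R * sph d (U \<omega>) (Suc k))"
  shows "(\<forall>z::complex. \<not> (AE \<omega> in M.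
            cplx_cond_exp M (vimage_algebra (space M) X2 (PiM {..<d-1} (\<lambda>_. borel)))
              (\<lambda>\<omega>'. exp (\<i> * z * complex_of_real (X1 \<omega>'))) \<omega> = 0))
       \<and> (\<forall>z::nat \<Rightarrow> complex. \<not> (AE \<omega> in M.
            cplx_cond_exp M (vimage_algebra (space M) X1 borel)
              (\<lambda>\<omega>'. exp (\<i> * (\<Sum>k<d-1. z k * complex_of_real (X2 \<omega>' k)))) \<omega> = 0))"
  using part1[OF assms(1,2,3,5) X1_def X2_def] part2[OF assms(1,2,3,5) f_pos X1_def X2_def]
  by blast

end
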